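(* Let $\mathfrak{q}$ be an $n\times n$ quantum parameter matrix over a field $k$ and $V$ a $k$-vector space with basis $v_1,\dots,v_n$. There exists an injective group homomorphism $\iota:\mathrm{Stab}(\mathfrak{q})\to\mathrm{Aut}_{\mathrm{gr}}(S_{\mathfrak{q}}(V))$ such that for each $\sigma\in\mathrm{Stab}(\mathfrak{q})$, $\iota(\sigma)$ lies in $\prod_{B\in\mathcal{B}_{\mathfrak{q}}}\mathrm{Hom}(V_B,V_{\sigma(B)})$, i.e. $\iota(\sigma)$ maps $V_B$ to $V_{\sigma(B)}$ for every block $B$ of $\mathfrak{q}$.
   Context: An $n\times n$ quantum parameter matrix is a matrix $\mathfrak{q}=(q_{ij})$ over $k$ with $q_{ii}=1$ and $q_{ij}q_{ji}=1$ for all $i,j$. $S_{\mathfrak{q}}(V)$ is the $k$-algebra generated by $v_1,\dots,v_n$ with relations $v_jv_i=q_{ij}v_iv_j$, graded by $\deg v_i=1$; $\mathrm{Aut}_{\mathrm{gr}}(S_{\mathfrak{q}}(V))$ is the group of degree-preserving algebra automorphisms, viewed as a subgroup of $\mathrm{GL}(V)$ by restriction. $\mathcal{B}_{\mathfrak{q}}$ is the partition of $[n]$ with $i\sim j$ iff rows $i,j$ of $\mathfrak{q}$ are identical; its classes are the blocks. $V_B=\mathrm{span}\{v_i:i\in B\}$ and $\mathfrak{q}_{BC}=(q_{ij})_{i\in B,j\in C}$. With $r=|\mathcal{B}_{\mathfrak{q}}|$, $\mathfrak{S}_r$ permutes the blocks, and $\mathrm{Stab}(\mathfrak{q})=\{\sigma\in\mathfrak{S}_r:|\sigma(B)|=|B|\text{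 and }\mathfrak{q}_{BC}=\mathfrak{q}_{\sigma(B)\sigma(C)}\text{ for all blocks }B,C\}$. *)

theory Defs
  imports "HOL-Combinatorics.Permutations"
begin

text \<open>Basis vectors v_i of V are indexed by a finite linearly ordered type 'n
  (the order is the order v_1 < ... < v_n, used to identify submatrices).
  A linear map g : V \<rightarrow> V is a matrix g :: 'n \<Rightarrow> 'n \<Rightarrow> 'k with
  g(v_i) = sum_j g j i v_j.\<close>

definition qpm :: "('n \<Rightarrow> 'n \<Rightarrow> 'k::field) \<Rightarrow> bool" where
  "qpm q \<longleftrightarrow> (\<forall>i. q i i = 1) \<and> (\<forall>i j. q i j * q j i = 1)"

definition mat_mult :: "('n::finite \<Rightarrow> 'n \<Rightarrow> 'k::field) \<Rightarrow> ('n \<Rightarrow> 'n \<Rightarrow> 'k) \<Rightarrow> 'n \<Rightarrow> 'n \<Rightarrow> 'k" where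
  "mat_mult g h = (\<lambda>j i. \<Sum>l\<in>UNIV. g j l * h l i)"

subsection \<open>Free algebra k<v_1,...,v_n> : finitely supported functions on words\<close>

definition FA :: "('n list \<Rightarrow> 'k::field) set" where
  "FA = {f. finite {w. f w \<noteq> 0}}"

definition wd :: "'n list \<Rightarrow> 'n list \<Rightarrow> 'k::field" where
  "wd u = (\<lambda>w. if w = u then 1 else 0)"

definition fa_mult :: "('n list \<Rightarrow> 'k::field) \<Rightarrow> ('n list \<Rightarrow> 'k) \<Rightarrow> 'n list \<Rightarrow> 'k" where
  "fa_mult f g = (\<lambda>w. \<Sum>i\<le>length w. f (take i w) * g (drop i w))"

inductive_set qideal :: "('n \<Rightarrow> 'n \<Rightarrow> 'k::field) \<Rightarrow> ('n list \<Rightarrow> 'k) set" for q where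
  rel: "(\<lambda>w. wd [j, i] w - q i j * wd [i, j] w) \<in> qideal q"
| zero: "(\<lambda>w. 0) \<in> qideal q"
| add: "a \<in> qideal q \<Longrightarrow> b \<in> qideal q \<Longrightarrow> (\<lambda>w. a w + b w) \<in> qideal q"
| smult: "a \<in> qideal q \<Longrightarrow> (\<lambda>w. c * a w) \<in> qideal q"
| lmult: "a \<in> qideal q \<Longrightarrow> u \<in> FA \<Longrightarrow> fa_mult u a \<in> qideal q"
| rmult: "a \<in> qideal q \<Longrightarrow> u \<in> FA \<Longrightarrow> fa_mult a u \<in> qideal q"

text \<open>The algebra endomorphism of the free algebra extending the linear map g
  (v_i \<mapsto> sum_j g j i v_j); it is degree preserving.\<close>
definition fa_ext :: "('n \<Rightarrow> 'n \<Rightarrow> 'k::field) \<Rightarrow> ('n list \<Rightarrow> 'k) \<Rightarrow> 'n list \<Rightarrow> 'k" where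
  "fa_ext g f = (\<lambda>u. \<Sum>w\<in>{w. f w \<noteq> 0 \<and> length w = length u}.
                       f w * (\<Prod>t<length u. g (u ! t) (w ! t)))"

text \<open>Aut_gr(S_q(V)) as a subset of GL(V): those linear maps g whose extension
  to the free algebra descends to S_q(V) = free algebra / qideal q and
  induces a bijection there (i.e. a graded algebra automorphism restricting to g).
  Every graded automorphism of S_q(V) arises this way from its restriction to V.\<close>
definition Aut_gr :: "('n \<Rightarrow> 'n \<Rightarrow> 'k::field) \<Rightarrow> ('n \<Rightarrow> 'n \<Rightarrow> 'k) set" where
  "Aut_gr q = {g. (\<forall>a\<in>qideal q. fa_ext g a \<in> qideal q)
      \<and> (\<forall>b\<in>FA. fa_ext g b \<in> qideal q \<longrightarrow> b \<in> qideal q)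
      \<and> (\<forall>a\<in>FA. \<exists>b\<in>FA. (\<lambda>w. fa_ext g b w - a w) \<in> qideal q)}"

definition blk :: "('n \<Rightarrow> 'n \<Rightarrow> 'k) \<Rightarrow> 'n \<Rightarrow> 'n set" where
  "blk q i = {j. \<forall>l. q j l = q i l}"

definition Blocks :: "('n \<Rightarrow> 'n \<Rightarrow> 'k) \<Rightarrow> 'n set set" where
  "Blocks q = range (blk q)"

text \<open>q_BC = q_{sigma B, sigma C}, matrices indexed in increasing order.\<close>
definition Stab :: "('n::{finite,linorder} \<Rightarrow> 'n \<Rightarrow> 'k) \<Rightarrow> ('n set \<Rightarrow> 'n set) set" where
  "Stab q = {\<sigma>. \<sigma> permutes Blocks q
     \<and> (\<forall>B\<in>Blocks q. card (\<sigma> B) = card B)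
     \<and> (\<forall>B\<in>Blocks q. \<forall>C\<in>Blocks q. \<forall>a<card B. \<forall>b<card C.
          q (sorted_list_of_set B ! a) (sorted_list_of_set C ! b)
          = q (sorted_list_of_set (\<sigma> B) ! a) (sorted_list_of_set (\<sigma> C) ! b))}"

end

theory Submission
  imports Defs
begin

definition perm_mat :: "('n \<Rightarrow> 'n) \<Rightarrow> 'n \<Rightarrow> 'n \<Rightarrow> 'k::field" where
  "perm_mat \<pi> = (\<lambda>j i. if j = \<pi> i then 1 else 0)"

lemma fa_ext_perm:
  fixes f :: "'n::finite list \<Rightarrow> 'k::field"
  assumes pr: "\<And>x. \<pi> (\<rho> x) = x" and rp: "\<And>x. \<rho> (\<pi> x) = x"
  shows "fa_ext (perm_mat \<pi>) f = (\<lambda>u. f (map \<rho> u))"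
proof
  fix u :: "'n list"
  define S where "S = {w. f w \<noteq> 0 \<and> length w = length u}"
  have fin: "finite S"
    by (rule finite_subset[OF _ finite_lists_length_eq[of UNIV "length u"]]) (auto simp: S_def)
  have summ: "f w * (\<Prod>t<length u. perm_mat \<pi> (u ! t) (w ! t)) = (if w = map \<rho> u then f w else 0)"
    if "w \<in> S" for w
  proof (cases "w = map \<rho> u")
    case True
    then show ?thesis by (simp add: perm_mat_def pr)
  next
    case False
    with that have "\<exists>t<length u. w ! t \<noteq> \<rho> (u ! t)"
      by (auto simp: S_def list_eq_iff_nth_eq)
    then obtain t where t: "t < length u" "w ! t \<noteq> \<rho> (u ! t)" by blast
    then have "u ! t \<noteq> \<pi> (w ! t)" using rp by metis
    then have "(\<Prod>t<length u. perm_mat \<pi> (u ! t) (w ! t)) = (0::'k)"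
      using t by (auto simp: perm_mat_def prod_zero_iff)
    then show ?thesis using False by simp
  qed
  have "fa_ext (perm_mat \<pi>) f u = (\<Sum>w\<in>S. (if w = map \<rho> u then f w else 0))"
    unfolding fa_ext_def S_def[symmetric] using summ by (rule sum.cong[OF refl])
  also have "\<dots> = f (map \<rho> u)"
    using fin by (simp add: sum.delta' S_def)
  finally show "fa_ext (perm_mat \<pi>) f u = f (map \<rho> u)" .
qed

lemma FA_map:
  assumes "inj \<rho>" "u \<in> FA"
  shows "(\<lambda>w. u (map \<rho> w)) \<in> FA"
proof -
  have "{w. u (map \<rho> w) \<noteq> 0} = map \<rho> -` {w. u w \<noteq> 0}" by auto
  moreover have "inj (map \<rho>)" using assms(1) by (simp add: inj_mapI)
  moreover have "finite {w. u w \<noteq> 0}" using assms(2) unfolding FA_def by simp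
  ultimately have "finite (map \<rho> -` {w. u w \<noteq> 0})" by (intro finite_vimageI)
  then show ?thesis unfolding FA_def by (simp add: vimage_def)
qed

lemma qideal_map:
  assumes pr: "\<And>x. \<pi> (\<rho> x) = x" and rp: "\<And>x. \<rho> (\<pi> x) = x"
    and qp: "\<And>i j. q (\<pi> i) (\<pi> j) = q i j"
    and a: "a \<in> qideal q"
  shows "(\<lambda>w. a (map \<rho> w)) \<in> qideal q"
  using a
proof (induction rule: qideal.induct)
  case (rel j i)
  have e: "\<And>x y w. wd [x, y] (map \<rho> w) = (wd [\<pi> x, \<pi> y] w :: 'b)"
  proof -
    fix x y w
    have "(map \<rho> w = [x, y]) = (w = [\<pi> x, \<pi> y])"
    proof
      assume "map \<rho> w = [x, y]"
      moreover have "w = map \<pi> (map \<rho> w)" by (simp add: pr map_idI)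
      ultimately show "w = [\<pi> x, \<pi> y]" by simp
    qed (simp add: rp)
    then show "wd [x, y] (map \<rho> w) = (wd [\<pi> x, \<pi> y] w :: 'b)" by (simp add: wd_def)
  qed
  have "(\<lambda>w. wd [j, i] (map \<rho> w) - q i j * wd [i, j] (map \<rho> w))
      = (\<lambda>w. wd [\<pi> j, \<pi> i] w - q (\<pi> i) (\<pi> j) * wd [\<pi> i, \<pi> j] w)"
    by (simp add: e qp)
  then show ?case by (simp add: qideal.rel)
next
  case zero
  then show ?case by (simp add: qideal.zero)
next
  case (add a b)
  then show ?case using qideal.add by fastforce
next
  case (smult a c)
  then show ?case using qideal.smult by fastforce
next
  case (lmult a u)
  have inj: "inj \<rho>" by (metis injI pr)
  have "(\<lambda>w. fa_mult u a (map \<rho> w)) = fa_mult (\<lambda>w. u (map \<rho> w)) (\<lambda>w. a (map \<rho> w))"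
    by (simp add: fa_mult_def take_map drop_map)
  then show ?case using lmult FA_map[OF inj] qideal.lmult by metis
next
  case (rmult a u)
  have inj: "inj \<rho>" by (metis injI pr)
  have "(\<lambda>w. fa_mult a u (map \<rho> w)) = fa_mult (\<lambda>w. a (map \<rho> w)) (\<lambda>w. u (map \<rho> w))"
    by (simp add: fa_mult_def take_map drop_map)
  then show ?case using rmult FA_map[OF inj] qideal.rmult by metis
qed

lemma perm_mat_Aut:
  fixes q :: "'n::finite \<Rightarrow> 'n \<Rightarrow> 'k::field"
  assumes pr: "\<And>x. \<pi> (\<rho> x) = x" and rp: "\<And>x. \<rho> (\<pi> x) = x"
    and qp: "\<And>i j. q (\<pi> i) (\<pi> j) = q i j"
  shows "perm_mat \<pi> \<in> Aut_gr q"
proof -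
  have qr: "q (\<rho> i) (\<rho> j) = q i j" for i j
    using qp[of "\<rho> i" "\<rho> j"] by (simp add: pr)
  have ext: "fa_ext (perm_mat \<pi>) f = (\<lambda>u. f (map \<rho> u))" for f :: "'n list \<Rightarrow> 'k"
    by (rule fa_ext_perm[OF pr rp])
  have c1: "\<forall>a\<in>qideal q. fa_ext (perm_mat \<pi>) a \<in> qideal q"
    using qideal_map[of \<pi> \<rho> q] pr rp qp by (simp add: ext)
  have c2: "\<forall>b\<in>FA. fa_ext (perm_mat \<pi>) b \<in> qideal q \<longrightarrow> b \<in> qideal q"
  proof (intro ballI impI)
    fix b assume "b \<in> FA" "fa_ext (perm_mat \<pi>) b \<in> qideal q"
    then have "(\<lambda>w. b (map \<rho> w)) \<in> qideal q" by (simp add: ext)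
    from qideal_map[of \<rho> \<pi> q, OF _ _ _ this] rp pr qr show "b \<in> qideal q"
      by (simp add: map_idI pr comp_def)
  qed
  have c3: "\<forall>a\<in>FA. \<exists>b\<in>FA. (\<lambda>w. fa_ext (perm_mat \<pi>) b w - a w) \<in> qideal q"
  proof
    fix a :: "'n list \<Rightarrow> 'k" assume a: "a \<in> FA"
    have inj: "inj \<pi>" by (metis injI rp)
    have "(\<lambda>w. a (map \<pi> w)) \<in> FA" by (rule FA_map[OF inj a])
    moreover have "(\<lambda>w. fa_ext (perm_mat \<pi>) (\<lambda>w. a (map \<pi> w)) w - a w) = (\<lambda>w. 0)"
      by (simp add: ext comp_def rp pr map_idI)
    ultimately show "\<exists>b\<in>FA. (\<lambda>w. fa_ext (perm_mat \<pi>) b w - a w) \<in> qideal q"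
      using qideal.zero by metis
  qed
  show ?thesis using c1 c2 c3 by (simp add: Aut_gr_def)
qed


definition pos :: "'n::linorder set \<Rightarrow> 'n \<Rightarrow> nat" where
  "pos B i = (THE a. a < card B \<and> sorted_list_of_set B ! a = i)"

lemma pos_prop:
  fixes B :: "'n::linorder set"
  assumes "finite B" "i \<in> B"
  shows "pos B i < card B \<and> sorted_list_of_set B ! pos B i = i"
proof -
  let ?l = "sorted_list_of_set B"
  have ex: "\<exists>a. a < card B \<and> ?l ! a = i"
    using assms by (metis in_set_conv_nth length_sorted_list_of_set set_sorted_list_of_set)
  have un: "a = b" if "a < card B \<and> ?l ! a = i" "b < card B \<and> ?l ! b = i" for a b
    using that nth_eq_iff_index_eq[of ?l a b] assms(1) by simp
  obtain a where a: "a < card B \<and> ?l ! a = i" using ex by blast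
  have "pos B i = a" unfolding pos_def
    by (rule the_equality) (use a un in blast)+
  then show ?thesis using a by simp
qed

lemma pos_unique:
  fixes B :: "'n::linorder set"
  assumes "finite B" "a < card B"
  shows "pos B (sorted_list_of_set B ! a) = a"
proof -
  have m: "sorted_list_of_set B ! a \<in> B"
    using assms by (metis nth_mem length_sorted_list_of_set set_sorted_list_of_set)
  from pos_prop[OF assms(1) m] assms show ?thesis
    using nth_eq_iff_index_eq[of "sorted_list_of_set B"] by auto
qed

definition permb :: "('n::{finite,linorder} \<Rightarrow> 'n \<Rightarrow> 'k) \<Rightarrow> ('n set \<Rightarrow> 'n set) \<Rightarrow> 'n \<Rightarrow> 'n" where
  "permb q \<sigma> i = sorted_list_of_set (\<sigma> (blk q i)) ! pos (blk q i) i"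

lemma blk_self: "i \<in> blk q i" by (simp add: blk_def)

lemma blk_in: "blk q i \<in> Blocks q" by (simp add: Blocks_def)

lemma pos_blk:
  fixes q :: "'n::{finite,linorder} \<Rightarrow> 'n \<Rightarrow> 'k"
  shows "pos (blk q i) i < card (blk q i) \<and> sorted_list_of_set (blk q i) ! pos (blk q i) i = i"
  by (rule pos_prop) (auto simp: blk_self)

lemma blk_eq: "B \<in> Blocks q \<Longrightarrow> i \<in> B \<Longrightarrow> blk q i = B"
  by (auto simp: Blocks_def blk_def)

lemma Stab_img: "\<sigma> \<in> Stab q \<Longrightarrow> B \<in> Blocks q \<Longrightarrow> \<sigma> B \<in> Blocks q"
  by (auto simp: Stab_def permutes_in_image)

lemma permb_in:
  fixes q :: "'n::{finite,linorder} \<Rightarrow> 'n \<Rightarrow> 'k"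
  assumes "\<sigma> \<in> Stab q"
  shows "permb q \<sigma> i \<in> \<sigma> (blk q i)"
proof -
  have c: "card (\<sigma> (blk q i)) = card (blk q i)" using assms blk_in[of q i] by (simp add: Stab_def)
  have "pos (blk q i) i < card (blk q i)" using pos_blk by blast
  then show ?thesis unfolding permb_def using c
    by (metis nth_mem length_sorted_list_of_set set_sorted_list_of_set finite)
qed

lemma permb_blk:
  assumes "\<sigma> \<in> Stab q"
  shows "blk q (permb q \<sigma> i) = \<sigma> (blk q i)"
  using blk_eq[OF Stab_img[OF assms blk_in] permb_in[OF assms]] .

lemma permb_pos:
  assumes "\<sigma> \<in> Stab q"
  shows "pos (\<sigma> (blk q i)) (permb q \<sigma> i) = pos (blk q i) i"
proof -
  have c: "card (\<sigma> (blk q i)) = card (blk q i)" using assms blk_in[of q i] by (simp add: Stab_def)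
  have "pos (blk q i) i < card (blk q i)" using pos_blk by blast
  then show ?thesis unfolding permb_def using c pos_unique by (metis finite)
qed

lemma permb_comp:
  assumes "\<sigma> \<in> Stab q" "\<tau> \<in> Stab q"
  shows "permb q (\<sigma> \<circ> \<tau>) i = permb q \<sigma> (permb q \<tau> i)"
  unfolding permb_def[of q \<sigma> "permb q \<tau> i"]
  by (simp add: permb_blk[OF assms(2)] permb_pos[OF assms(2)]) (simp add: permb_def)

lemma permb_q:
  assumes "\<sigma> \<in> Stab q"
  shows "q (permb q \<sigma> i) (permb q \<sigma> j) = q i j"
proof -
  have "pos (blk q i) i < card (blk q i)" "pos (blk q j) j < card (blk q j)"
    "sorted_list_of_set (blk q i) ! pos (blk q i) i = i"
    "sorted_list_of_set (blk q j) ! pos (blk q j) j = j"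
    using pos_blk by blast+
  moreover have "\<forall>B\<in>Blocks q. \<forall>C\<in>Blocks q. \<forall>a<card B. \<forall>b<card C.
          q (sorted_list_of_set B ! a) (sorted_list_of_set C ! b)
          = q (sorted_list_of_set (\<sigma> B) ! a) (sorted_list_of_set (\<sigma> C) ! b)"
    using assms by (simp add: Stab_def)
  ultimately have "q (sorted_list_of_set (blk q i) ! pos (blk q i) i) (sorted_list_of_set (blk q j) ! pos (blk q j) j)
      = q (sorted_list_of_set (\<sigma> (blk q i)) ! pos (blk q i) i) (sorted_list_of_set (\<sigma> (blk q j)) ! pos (blk q j) j)"
    using blk_in[of q i] blk_in[of q j] by blast
  then show ?thesis using \<open>sorted_list_of_set (blk q i) ! pos (blk q i) i = i\<close>
    \<open>sorted_list_of_set (blk q j) ! pos (blk q j) j = j\<close> by (simp add: permb_def)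
qed

lemma Blocks_disj: "B \<in> Blocks q \<Longrightarrow> C \<in> Blocks q \<Longrightarrow> x \<in> B \<Longrightarrow> x \<in> C \<Longrightarrow> B = C"
  using blk_eq by metis

lemma permb_inj:
  assumes "\<sigma> \<in> Stab q"
  shows "inj (permb q \<sigma>)"
proof (rule injI)
  fix i j assume e: "permb q \<sigma> i = permb q \<sigma> j"
  have "\<sigma> (blk q i) = \<sigma> (blk q j)"
    using permb_blk[OF assms, of i] permb_blk[OF assms, of j] e by simp
  moreover have "inj_on \<sigma> (Blocks q)"
  proof -
    have "\<sigma> permutes Blocks q" using assms by (simp add: Stab_def)
    then have "inj \<sigma>" by (rule permutes_inj)
    then show ?thesis by (rule inj_on_subset) simp
  qed
  ultimately have b: "blk q i = blk q j" using blk_in[of q i] blk_in[of q j] by (metis inj_onD)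
  have "pos (blk q i) i = pos (blk q j) j"
    using permb_pos[OF assms, of i] permb_pos[OF assms, of j] e b by simp
  then show "i = j" using pos_blk[of q i] pos_blk[of q j] b
    by metis
qed

theorem lemma2p5:
  fixes q :: "'n::{finite,linorder} \<Rightarrow> 'n \<Rightarrow> 'k::field"
  assumes "qpm q"
  shows "\<exists>\<iota> :: ('n set \<Rightarrow> 'n set) \<Rightarrow> ('n \<Rightarrow> 'n \<Rightarrow> 'k).
           (\<forall>\<sigma>\<in>Stab q. \<iota> \<sigma> \<in> Aut_gr q)
         \<and> (\<forall>\<sigma>\<in>Stab q. \<forall>\<tau>\<in>Stab q. \<iota> (\<sigma> \<circ> \<tau>) = mat_mult (\<iota> \<sigma>) (\<iota> \<tau>))
         \<and> inj_on \<iota> (Stab q)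
         \<and> (\<forall>\<sigma>\<in>Stab q. \<forall>B\<in>Blocks q. \<forall>i\<in>B. \<forall>j. j \<notin> \<sigma> B \<longrightarrow> \<iota> \<sigma> j i = 0)"
proof (intro exI[of _ "\<lambda>\<sigma>. perm_mat (permb q \<sigma>)"] conjI ballI allI impI)
  fix \<sigma> assume s: "\<sigma> \<in> Stab q"
  have inj: "inj (permb q \<sigma>)" by (rule permb_inj[OF s])
  have surj: "surj (permb q \<sigma>)" using inj finite_UNIV_inj_surj[of "permb q \<sigma>"] by simp
  show "perm_mat (permb q \<sigma>) \<in> Aut_gr q"
    by (rule perm_mat_Aut[where \<rho> = "inv (permb q \<sigma>)"])
       (auto simp: surj_f_inv_f[OF surj] inv_f_f[OF inj] permb_q[OF s])
next
  fix \<sigma> \<tau> assume s: "\<sigma> \<in> Stab q" and t: "\<tau> \<in> Stab q"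
  show "(perm_mat (permb q (\<sigma> \<circ> \<tau>)) :: 'n \<Rightarrow> 'n \<Rightarrow> 'k) = mat_mult (perm_mat (permb q \<sigma>)) (perm_mat (permb q \<tau>))"
  proof (intro ext)
    fix j i
    have "mat_mult (perm_mat (permb q \<sigma>)) (perm_mat (permb q \<tau>)) j i
       = (\<Sum>l\<in>UNIV. if l = permb q \<tau> i then (if j = permb q \<sigma> l then 1 else 0) else (0::'k))"
      unfolding mat_mult_def perm_mat_def by (intro sum.cong) auto
    also have "\<dots> = perm_mat (permb q (\<sigma> \<circ> \<tau>)) j i"
      by (simp add: perm_mat_def permb_comp[OF s t])
    finally show "(perm_mat (permb q (\<sigma> \<circ> \<tau>)) j i :: 'k) = mat_mult (perm_mat (permb q \<sigma>)) (perm_mat (permb q \<tau>)) j i" by (rule sym)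
  qed
next
  show "inj_on (\<lambda>\<sigma>. perm_mat (permb q \<sigma>) :: 'n \<Rightarrow> 'n \<Rightarrow> 'k) (Stab q)"
  proof (rule inj_onI)
    fix \<sigma> \<tau> assume s: "\<sigma> \<in> Stab q" and t: "\<tau> \<in> Stab q"
      and e: "(perm_mat (permb q \<sigma>) :: 'n \<Rightarrow> 'n \<Rightarrow> 'k) = perm_mat (permb q \<tau>)"
    have pe: "permb q \<sigma> i = permb q \<tau> i" for i
    proof -
      have "(perm_mat (permb q \<sigma>) :: 'n \<Rightarrow> 'n \<Rightarrow> 'k) (permb q \<sigma> i) i = perm_mat (permb q \<tau>) (permb q \<sigma> i) i"
        using e by simp
      then show ?thesis by (simp add: perm_mat_def split: if_splits)
    qed
    show "\<sigma> = \<tau>"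
    proof
      fix X
      show "\<sigma> X = \<tau> X"
      proof (cases "X \<in> Blocks q")
        case True
        then obtain i where X: "X = blk q i" by (auto simp: Blocks_def)
        show ?thesis using permb_blk[OF s, of i] permb_blk[OF t, of i] pe X by simp
      next
        case False
        have "\<sigma> permutes Blocks q" "\<tau> permutes Blocks q" using s t by (simp_all add: Stab_def)
        then show ?thesis using False by (simp add: permutes_not_in)
      qed
    qed
  qed
next
  fix \<sigma> B i j assume s: "\<sigma> \<in> Stab q" and B: "B \<in> Blocks q" and i: "i \<in> B" and j: "j \<notin> \<sigma> B"
  have "permb q \<sigma> i \<in> \<sigma> B" using permb_in[OF s, of i] blk_eq[OF B i] by simp
  then show "perm_mat (permb q \<sigma>) j i = 0" using j by (auto simp: perm_mat_def)
qed

end
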